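(* Let $\mathscr{G}_n$ be a simple, verbose $\upsilon$-reduction grammar. Then for each production $G_n \to \chi[\sigma_1]\cdots[\sigma_w]$ of $\mathscr{G}_n$ whose right-hand side has closure width $w$, every ground term $\delta \in L(\chi[\sigma_1]\cdots[\sigma_w])$ has closure width $w$.
   Context: $\lambda\upsilon$-terms: $t ::= \underline{n} \mid \lambda t \mid t\,t \mid t[s]$; substitutions $s ::= t/ \mid \Uparrow(s) \mid\ \uparrow$; indices $\underline{n} ::= \underline{0} \mid \mathtt{S}\,\underline{n}$. The $\upsilon$-rules: $(a b)[s] \to a[s](b[s])$; $(\lambda a)[s] \to \lambda(a[\Uparrow(s)])$; $\underline{0}[a/] \to a$; $(\mathtt{S}\,\underline{n})[a/] \to \underline{n}$; $\underline{0}[\Uparrow(s)] \to \underline{0}$; $(\mathtt{S}\,\underline{n})[\Uparrow(s)] \to \underline{n}[s][\uparrow]$; $\underline{n}[\uparrow] \to \mathtt{S}\,\underline{n}$. A term normalises in $k$ steps if leftmost-outermost $\upsilon$-reduction reaches a $\upsilon$-normal form in exactly $k$ steps. $\mathscr{F}$ is the ranked alphabet of $\lambda\upsilon$ symbols (application, closure $\cdot[\cdot]$ binary; $\lambda$, $\cdot/$, $\Uparrow$, $\mathtt{S}$ unary; $\uparrow,\underline{0}$ constants); $\mathscr{T}_{\mathscr{F}}(X)$ is the set of terms over $\mathscr{F}$ with variables from $X$. In a regular tree grammar with productions $X\to\alpha$, $L(\alpha)$ is the set of ground terms derivable from $\alpha$; a non-terminal is unambiguous if each ground term has at most one derivation from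 it; a production $X\to\alpha$ is self-referencing if $X$ occurs in $\alpha$, regular otherwise. $\Lambda$ has productions $T \to N \mid \lambda T \mid T T \mid T[S]$, $S \to T/ \mid \Uparrow(S) \mid \uparrow$, $N \to \underline{0} \mid \mathtt{S} N$. A $\upsilon$-reduction grammar $\mathscr{G}_n$ has axiom $G_n$, non-terminals $\{T,S,N,G_0,\dots,G_n\}$, contains all productions of $\Lambda$, and each $G_k$ ($0\le k\le n$) is unambiguous with $L(G_k)$ the set of terms normalising in exactly $k$ steps. It is simple if its self-referencing productions are productions of $\Lambda$ or of the form $G_k \to \lambda G_k \mid G_0 G_k \mid G_k G_0$, and each regular production $G_k\to\alpha$ has $\alpha \in \mathscr{T}_{\mathscr{F}}(\{T,S,N,G_0,\dots,G_{k-1}\})$. It is verbose if none of its productions has the form $X \to G_k[\sigma_1]\cdots[\sigma_w]$ for some $k$ and $w\ge 0$. A term $\alpha$ has closure width $w$ if $w$ is the largest non-negative integer such that $\alpha = \chi[\sigma_1]\cdots[\sigma_w]$ for some term $\chi$ (the head) and terms $\sigma_1,\dots,\sigma_w$. *)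

theory Defs
  imports Main
begin

datatype 'v tm =
    Var 'v
  | App "'v tm" "'v tm"
  | Clo "'v tm" "'v tm"
  | Lam "'v tm"
  | Slash "'v tm"
  | Lift "'v tm"
  | Succ "'v tm"
  | Shift
  | Zero

text \<open>Ground terms are those without variables (set_tm t = {}).\<close>

fun is_idx :: "'v tm \<Rightarrow> bool" where
  "is_idx Zero = True"
| "is_idx (Succ n) = is_idx n"
| "is_idx _ = False"

fun is_term :: "'v tm \<Rightarrow> bool" and is_subst :: "'v tm \<Rightarrow> bool" where
  "is_term Zero = True"
| "is_term (Succ n) = is_idx n"
| "is_term (Lam a) = is_term a"
| "is_term (App a b) = (is_term a \<and> is_term b)"
| "is_term (Clo a s) = (is_term a \<and> is_subst s)"
| "is_term _ = False"
| "is_subst (Slash a) = is_term a"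
| "is_subst (Lift s) = is_subst s"
| "is_subst Shift = True"
| "is_subst _ = False"

fun contract :: "'v tm \<Rightarrow> 'v tm option" where
  "contract (Clo (App a b) s) = Some (App (Clo a s) (Clo b s))"
| "contract (Clo (Lam a) s) = Some (Lam (Clo a (Lift s)))"
| "contract (Clo Zero (Slash a)) = Some a"
| "contract (Clo (Succ n) (Slash a)) = (if is_idx n then Some n else None)"
| "contract (Clo Zero (Lift s)) = Some Zero"
| "contract (Clo (Succ n) (Lift s)) = (if is_idx n then Some (Clo (Clo n s) Shift) else None)"
| "contract (Clo n Shift) = (if is_idx n then Some (Succ n) else None)"
| "contract _ = None"

definition first2 :: "('v tm \<Rightarrow> 'v tm \<Rightarrow> 'v tm) \<Rightarrow> 'v tm \<Rightarrow> 'v tm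
                      \<Rightarrow> 'v tm option \<Rightarrow> 'v tm option \<Rightarrow> 'v tm option" where
  "first2 C a b ra rb = (case ra of Some a' \<Rightarrow> Some (C a' b) | None \<Rightarrow> map_option (C a) rb)"

text \<open>One leftmost-outermost step: contract the first redex in pre-order; None iff normal form.\<close>
fun lo_step :: "'v tm \<Rightarrow> 'v tm option" where
  "lo_step (Var x) = None"
| "lo_step Zero = None"
| "lo_step Shift = None"
| "lo_step (App a b) = first2 App a b (lo_step a) (lo_step b)"
| "lo_step (Clo a s) = (case contract (Clo a s) of Some u \<Rightarrow> Some u
                          | None \<Rightarrow> first2 Clo a s (lo_step a) (lo_step s))"
| "lo_step (Lam a) = map_option Lam (lo_step a)"
| "lo_step (Slash a) = map_option Slash (lo_step a)"
| "lo_step (Lift a) = map_option Lift (lo_step a)"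
| "lo_step (Succ a) = map_option Succ (lo_step a)"

fun lo_iter :: "nat \<Rightarrow> 'v tm \<Rightarrow> 'v tm option" where
  "lo_iter 0 t = Some t"
| "lo_iter (Suc k) t = (case lo_step t of None \<Rightarrow> None | Some t' \<Rightarrow> lo_iter k t')"

definition normalises_in :: "'v tm \<Rightarrow> nat \<Rightarrow> bool" where
  "normalises_in t k \<longleftrightarrow> (\<exists>u. lo_iter k t = Some u \<and> lo_step u = None)"

datatype nt = NT | NS | NN | NG nat

type_synonym prod = "nt \<times> nt tm"

datatype drv = DNode prod "drv list"

text \<open>deriv P X d t: d is a derivation of ground term t from non-terminal X;
  rderiv P \<alpha> ds t: ds are the derivations for the non-terminal occurrences of \<alpha>
  (left to right), yielding the ground term t.\<close>
inductive deriv :: "prod set \<Rightarrow> nt \<Rightarrow> drv \<Rightarrow> nt tm \<Rightarrow> bool"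
  and rderiv :: "prod set \<Rightarrow> nt tm \<Rightarrow> drv list \<Rightarrow> nt tm \<Rightarrow> bool"
  for P :: "prod set" where
  d_prod: "(X, \<alpha>) \<in> P \<Longrightarrow> rderiv P \<alpha> ds t \<Longrightarrow> deriv P X (DNode (X, \<alpha>) ds) t"
| r_var: "deriv P Y d t \<Longrightarrow> rderiv P (Var Y) [d] t"
| r_app: "rderiv P a ds1 t1 \<Longrightarrow> rderiv P b ds2 t2 \<Longrightarrow> rderiv P (App a b) (ds1 @ ds2) (App t1 t2)"
| r_clo: "rderiv P a ds1 t1 \<Longrightarrow> rderiv P b ds2 t2 \<Longrightarrow> rderiv P (Clo a b) (ds1 @ ds2) (Clo t1 t2)"
| r_lam: "rderiv P a ds t \<Longrightarrow> rderiv P (Lam a) ds (Lam t)"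
| r_slash: "rderiv P a ds t \<Longrightarrow> rderiv P (Slash a) ds (Slash t)"
| r_lift: "rderiv P a ds t \<Longrightarrow> rderiv P (Lift a) ds (Lift t)"
| r_succ: "rderiv P a ds t \<Longrightarrow> rderiv P (Succ a) ds (Succ t)"
| r_shift: "rderiv P Shift [] Shift"
| r_zero: "rderiv P Zero [] Zero"

definition lang :: "prod set \<Rightarrow> nt tm \<Rightarrow> nt tm set" where
  "lang P \<alpha> = {t. \<exists>ds. rderiv P \<alpha> ds t}"

definition unambiguous :: "prod set \<Rightarrow> nt \<Rightarrow> bool" where
  "unambiguous P X \<longleftrightarrow> (\<forall>t d1 d2. deriv P X d1 t \<longrightarrow> deriv P X d2 t \<longrightarrow> d1 = d2)"

definition Lambda_prods :: "prod set" where
  "Lambda_prods = {(NT, Var NN), (NT, Lam (Var NT)), (NT, App (Var NT) (Var NT)),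
                   (NT, Clo (Var NT) (Var NS)),
                   (NS, Slash (Var NT)), (NS, Lift (Var NS)), (NS, Shift),
                   (NN, Zero), (NN, Succ (Var NN))}"

definition nonterms :: "nat \<Rightarrow> nt set" where
  "nonterms n = {NT, NS, NN} \<union> NG ` {..n}"

text \<open>An upsilon-reduction grammar G_n (axiom NG n).\<close>
definition reduction_grammar :: "prod set \<Rightarrow> nat \<Rightarrow> bool" where
  "reduction_grammar P n \<longleftrightarrow>
     finite P
   \<and> (\<forall>(X, \<alpha>) \<in> P. X \<in> nonterms n \<and> set_tm \<alpha> \<subseteq> nonterms n)
   \<and> Lambda_prods \<subseteq> P
   \<and> (\<forall>k \<le> n. unambiguous P (NG k)
              \<and> lang P (Var (NG k)) = {t. is_term t \<and> normalises_in t k})"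

definition simple_grammar :: "prod set \<Rightarrow> bool" where
  "simple_grammar P \<longleftrightarrow>
     (\<forall>(X, \<alpha>) \<in> P.
        (X \<in> set_tm \<alpha> \<longrightarrow>
           (X, \<alpha>) \<in> Lambda_prods
         \<or> (\<exists>k. X = NG k \<and> (\<alpha> = Lam (Var (NG k)) \<or> \<alpha> = App (Var (NG 0)) (Var (NG k))
                                \<or> \<alpha> = App (Var (NG k)) (Var (NG 0))))) \<and>
        (\<forall>k. X = NG k \<and> X \<notin> set_tm \<alpha> \<longrightarrow> set_tm \<alpha> \<subseteq> {NT, NS, NN} \<union> NG ` {..<k}))"

definition closures :: "'v tm \<Rightarrow> 'v tm list \<Rightarrow> 'v tm" where
  "closures \<chi> \<sigma>s = foldl Clo \<chi> \<sigma>s"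

definition verbose :: "prod set \<Rightarrow> bool" where
  "verbose P \<longleftrightarrow> (\<forall>(X, \<alpha>) \<in> P. \<not> (\<exists>k \<sigma>s. \<alpha> = closures (Var (NG k)) \<sigma>s))"

definition closure_width :: "'v tm \<Rightarrow> nat" where
  "closure_width \<alpha> = (GREATEST w. \<exists>\<chi> \<sigma>s. length \<sigma>s = w \<and> \<alpha> = closures \<chi> \<sigma>s)"

end

theory Submission
  imports Defs
begin

fun cwf :: "'v tm \<Rightarrow> nat" where
  "cwf (Clo a b) = Suc (cwf a)"
| "cwf _ = 0"

fun hd_of :: "'v tm \<Rightarrow> 'v tm" where
  "hd_of (Clo a b) = hd_of a"
| "hd_of t = t"

fun sp :: "'v tm \<Rightarrow> 'v tm list" where
  "sp (Clo a b) = sp a @ [b]"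
| "sp _ = []"

lemma closures_snoc[simp]: "closures c (xs @ [x]) = Clo (closures c xs) x"
  by (simp add: closures_def)

lemma closures_Nil[simp]: "closures c [] = c"
  by (simp add: closures_def)

lemma closures_Cons: "closures c (x # xs) = closures (Clo c x) xs"
  by (simp add: closures_def)

lemma decomp: "closures (hd_of t) (sp t) = t"
  by (induction t) auto

lemma cwf_hd: "cwf (hd_of t) = 0"
  by (induction t) auto

lemma len_sp: "length (sp t) = cwf t"
  by (induction t) auto

lemma cwf_closures: "cwf (closures c xs) = cwf c + length xs"
  by (induction xs rule: rev_induct) auto

lemma cw_eq: "closure_width t = cwf t"
  unfolding closure_width_def
proof (rule Greatest_equality)
  show "\<exists>\<chi> \<sigma>s. length \<sigma>s = cwf t \<and> t = closures \<chi> \<sigma>s"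
    using decomp[of t] len_sp[of t] by metis
next
  fix y assume "\<exists>\<chi> \<sigma>s. length \<sigma>s = y \<and> t = closures \<chi> \<sigma>s"
  then obtain \<chi> \<sigma>s where "length \<sigma>s = y" "t = closures \<chi> \<sigma>s" by blast
  then show "y \<le> cwf t" using cwf_closures[of \<chi> \<sigma>s] by simp
qed

lemma clo_inv:
  "rderiv P (closures \<chi> \<sigma>s) ds \<delta> \<Longrightarrow> \<exists>t ds0 ss. rderiv P \<chi> ds0 t \<and> \<delta> = closures t ss
     \<and> length ss = length \<sigma>s
     \<and> (\<forall>t' ds'. rderiv P \<chi> ds' t' \<longrightarrow> (\<exists>ds''. rderiv P (closures \<chi> \<sigma>s) ds'' (closures t' ss)))"
proof (induction \<sigma>s arbitrary: ds \<delta> rule: rev_induct)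
  case Nil
  then show ?case by fastforce
next
  case (snoc x xs)
  from snoc.prems have "rderiv P (Clo (closures \<chi> xs) x) ds \<delta>" by simp
  then obtain ds1 ds2 t1 t2 where d: "rderiv P (closures \<chi> xs) ds1 t1" "rderiv P x ds2 t2"
     "\<delta> = Clo t1 t2" "ds = ds1 @ ds2"
    by (cases rule: rderiv.cases) auto
  from snoc.IH[OF d(1)] obtain t ds0 ss where
    h: "rderiv P \<chi> ds0 t" "t1 = closures t ss" "length ss = length xs"
    "\<forall>t' ds'. rderiv P \<chi> ds' t' \<longrightarrow> (\<exists>ds''. rderiv P (closures \<chi> xs) ds'' (closures t' ss))"
    by blast
  show ?case
  proof (intro exI conjI)
    show "rderiv P \<chi> ds0 t" by fact
    show "\<delta> = closures t (ss @ [t2])" using h d by simp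
    show "length (ss @ [t2]) = length (xs @ [x])" using h by simp
    show "\<forall>t' ds'. rderiv P \<chi> ds' t' \<longrightarrow> (\<exists>ds''. rderiv P (closures \<chi> (xs @ [x])) ds'' (closures t' (ss @ [t2])))"
    proof (intro allI impI)
      fix t' ds' assume "rderiv P \<chi> ds' t'"
      with h(4) obtain ds'' where "rderiv P (closures \<chi> xs) ds'' (closures t' ss)" by blast
      then have "rderiv P (Clo (closures \<chi> xs) x) (ds'' @ ds2) (Clo (closures t' ss) t2)"
        using d(2) by (rule r_clo)
      then show "\<exists>ds''. rderiv P (closures \<chi> (xs @ [x])) ds'' (closures t' (ss @ [t2]))" by auto
    qed
  qed
qed

lemma same_head:
  "rderiv P \<chi> ds t \<Longrightarrow> (\<forall>X. \<chi> \<noteq> Var X) \<Longrightarrow> cwf \<chi> = 0 \<Longrightarrow> cwf t = 0"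
  by (cases rule: rderiv.cases) auto

lemma is_term_closures: "is_term (closures t ss) \<Longrightarrow> is_term t"
  by (induction ss rule: rev_induct) auto

lemma clo_not_nf: "is_term a \<Longrightarrow> is_subst s \<Longrightarrow> lo_step (Clo a s) \<noteq> None"
proof (induction a arbitrary: s)
  case (Clo a1 a2)
  then have "lo_step (Clo a1 a2) \<noteq> None" by simp
  then show ?case by (auto simp: first2_def split: option.splits)
next
  case (Succ n)
  then show ?case by (cases s) auto
next
  case Zero
  then show ?case by (cases s) auto
qed auto

lemma normalises_det: "normalises_in t k \<Longrightarrow> normalises_in t k' \<Longrightarrow> k = k'"
proof (induction k arbitrary: t k')
  case 0
  then show ?case by (cases k') (auto simp: normalises_in_def split: option.splits)
next
  case (Suc k)
  then show ?case
    by (cases k') (auto simp: normalises_in_def split: option.splits)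
qed

lemma lo_iter_add: "lo_iter (a + b) t = Option.bind (lo_iter a t) (lo_iter b)"
  by (induction a arbitrary: t) (auto split: option.splits)

lemma clo_ex: "ss \<noteq> [] \<Longrightarrow> \<exists>a b. closures c ss = Clo a b"
  by (cases ss rule: rev_cases) auto

lemma contract_CloClo[simp]: "contract (Clo (Clo x y) r) = None"
  by (cases r) auto

lemma clo_ctx: "lo_step (Clo x y) = Some z \<Longrightarrow> lo_step (Clo (Clo x y) r) = Some (Clo z r)"
  by (simp add: first2_def)

lemma dist1: "lo_step (closures (App a b) (s # rest)) = Some (closures (App (Clo a s) (Clo b s)) rest)"
proof (induction rest rule: rev_induct)
  case Nil
  then show ?case by (simp add: closures_Cons)
next
  case (snoc r rest)
  obtain x y where xy: "closures (App a b) (s # rest) = Clo x y"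
    using clo_ex[of "s # rest"] by blast
  have e: "closures (App a b) (s # rest @ [r]) = Clo (Clo x y) r"
    using xy by (metis append_Cons closures_snoc)
  have "lo_step (Clo x y) = Some (closures (App (Clo a s) (Clo b s)) rest)"
    using snoc.IH xy by metis
  then have "lo_step (Clo (Clo x y) r) = Some (Clo (closures (App (Clo a s) (Clo b s)) rest) r)"
    by (rule clo_ctx)
  then show ?case using e by simp
qed

lemma distk: "lo_iter (length ss2) (closures (App (closures a ss1) (closures b ss1)) ss2)
   = Some (App (closures a (ss1 @ ss2)) (closures b (ss1 @ ss2)))"
proof (induction ss2 arbitrary: ss1)
  case Nil
  then show ?case by simp
next
  case (Cons s rest)
  have "lo_step (closures (App (closures a ss1) (closures b ss1)) (s # rest))
     = Some (closures (App (closures a (ss1 @ [s])) (closures b (ss1 @ [s]))) rest)"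
    by (simp add: dist1)
  then show ?case using Cons[of "ss1 @ [s]"] by simp
qed

lemma app_left: "lo_iter k A = Some A' \<Longrightarrow> lo_iter k (App A B) = Some (App A' B)"
proof (induction k arbitrary: A)
  case (Suc k)
  then obtain A1 where "lo_step A = Some A1" "lo_iter k A1 = Some A'"
    by (auto split: option.splits)
  then show ?case using Suc by (simp add: first2_def)
qed simp

lemma app_right: "lo_step A = None \<Longrightarrow> lo_iter k B = Some B' \<Longrightarrow> lo_iter k (App A B) = Some (App A B')"
proof (induction k arbitrary: B)
  case (Suc k)
  then obtain B1 where "lo_step B = Some B1" "lo_iter k B1 = Some B'"
    by (auto split: option.splits)
  then show ?case using Suc by (simp add: first2_def)
qed simp

lemma app_norm:
  assumes "normalises_in (closures Zero ss) k"
  shows "normalises_in (closures (App Zero Zero) ss) (length ss + k + k)"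
proof -
  obtain u where u: "lo_iter k (closures Zero ss) = Some u" "lo_step u = None"
    using assms normalises_in_def by blast
  have 1: "lo_iter (length ss) (closures (App Zero Zero) ss) = Some (App (closures Zero ss) (closures Zero ss))"
    using distk[of ss Zero "[]" Zero] by simp
  have 2: "lo_iter k (App (closures Zero ss) (closures Zero ss)) = Some (App u (closures Zero ss))"
    using app_left[OF u(1)] .
  have 3: "lo_iter k (App u (closures Zero ss)) = Some (App u u)"
    using app_right[OF u(2) u(1)] .
  have 4: "lo_step (App u u) = None" using u(2) by (simp add: first2_def)
  show ?thesis unfolding normalises_in_def
    using 1 2 3 4 by (simp add: lo_iter_add)
qed

abbreviation sucs :: "nat \<Rightarrow> 'v tm \<Rightarrow> 'v tm" where
  "sucs m c \<equiv> (Succ ^^ m) c"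

lemma sucs_inj: "sucs m (Zero::'v tm) = sucs m' Zero \<Longrightarrow> m = m'"
proof (induction m arbitrary: m')
  case 0 then show ?case by (cases m') auto
next
  case (Suc m) then show ?case by (cases m') auto
qed

lemma sucs_term: "is_term (sucs m Zero)"
proof (cases m)
  case (Suc k)
  have "is_idx (sucs k Zero)" by (induction k) auto
  then show ?thesis using Suc by simp
qed simp

lemma sucs_nf: "lo_step (sucs m Zero) = None"
  by (induction m) auto

lemma sucs_idx: "is_idx (sucs m c) = is_idx c"
  by (induction m) auto

lemma sucs_cases: "sucs m Zero = Zero \<or> (\<exists>x. sucs m Zero = Succ x)"
  by (cases m) auto

lemma idx_shape: "rderiv P \<beta> ds t \<Longrightarrow> is_idx t \<Longrightarrow> (\<exists>X. \<beta> = Var X) \<or> (\<exists>b. \<beta> = Succ b) \<or> \<beta> = Zero"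
  by (cases rule: rderiv.cases) auto

lemma idx_sucs: "is_idx (sucs m Zero)"
  by (induction m) auto

lemma shp: "rderiv P \<beta> ds (sucs m Zero) \<Longrightarrow> (\<exists>X. \<beta> = Var X) \<or> (\<exists>b. \<beta> = Succ b) \<or> \<beta> = Zero"
  using idx_shape idx_sucs by blast

lemma shape:
  "rderiv P \<beta> ds t \<Longrightarrow> t = sucs m Zero \<Longrightarrow> \<beta> = sucs m Zero \<or>
     (\<exists>j X d. j \<le> m \<and> \<beta> = sucs j (Var X) \<and> deriv P X d (sucs (m - j) Zero))"
proof (induction \<beta> arbitrary: ds t m)
  case (Var X)
  then show ?case
    by (cases rule: rderiv.cases) (metis funpow_0 diff_zero le0)+
next
  case (Succ \<beta>')
  from Succ.prems(1) obtain t' where t': "rderiv P \<beta>' ds t'" "t = Succ t'"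
    by (cases rule: rderiv.cases) auto
  then obtain m' where m: "m = Suc m'" "t' = sucs m' Zero" using Succ.prems(2)
    by (cases m) auto
  from Succ.IH[OF t'(1) m(2)] show ?case
  proof
    assume "\<beta>' = sucs m' Zero" then show ?thesis using m by simp
  next
    assume "\<exists>j X d. j \<le> m' \<and> \<beta>' = sucs j (Var X) \<and> deriv P X d (sucs (m' - j) Zero)"
    then obtain j X d where "j \<le> m'" "\<beta>' = sucs j (Var X)" "deriv P X d (sucs (m' - j) Zero)" by blast
    then show ?thesis using m
      by (intro disjI2 exI[of _ "Suc j"] exI[of _ X] exI[of _ d]) auto
  qed
next
  case Zero
  then show ?case by (cases m) (auto elim: rderiv.cases)
qed (auto dest!: shp)

lemma rderiv_sucs: "deriv P X d c \<Longrightarrow> rderiv P (sucs j (Var X)) [d] (sucs j c)"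
  by (induction j) (auto intro: deriv_rderiv.intros)

lemma lam_in: "Lambda_prods \<subseteq> P \<Longrightarrow> (X, \<alpha>) \<in> Lambda_prods \<Longrightarrow> (X, \<alpha>) \<in> P"
  by blast

lemma d_zero: "Lambda_prods \<subseteq> P \<Longrightarrow> \<exists>d. deriv P NT d Zero"
proof -
  assume L: "Lambda_prods \<subseteq> P"
  have "(NN, Zero) \<in> P" "(NT, Var NN) \<in> P" using L by (auto simp: Lambda_prods_def)
  then show ?thesis by (meson deriv_rderiv.intros)
qed

lemma d_shift: "Lambda_prods \<subseteq> P \<Longrightarrow> \<exists>d. deriv P NS d Shift"
proof -
  assume L: "Lambda_prods \<subseteq> P"
  have "(NS, Shift) \<in> P" using L by (auto simp: Lambda_prods_def)
  then show ?thesis by (meson deriv_rderiv.intros)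
qed

lemma d_cloZS: "Lambda_prods \<subseteq> P \<Longrightarrow> \<exists>d. deriv P NT d (Clo Zero Shift)"
proof -
  assume L: "Lambda_prods \<subseteq> P"
  have p: "(NT, Clo (Var NT) (Var NS)) \<in> P" using L by (auto simp: Lambda_prods_def)
  obtain d1 where "deriv P NT d1 Zero" using d_zero L by blast
  moreover obtain d2 where "deriv P NS d2 Shift" using d_shift L by blast
  ultimately have "rderiv P (Clo (Var NT) (Var NS)) ([d1] @ [d2]) (Clo Zero Shift)"
    by (meson deriv_rderiv.intros)
  then show ?thesis using p by (meson deriv_rderiv.intros)
qed

lemma d_app: "Lambda_prods \<subseteq> P \<Longrightarrow> \<exists>d. deriv P NT d (App Zero Zero)"
proof -
  assume L: "Lambda_prods \<subseteq> P"
  have p: "(NT, App (Var NT) (Var NT)) \<in> P" using L by (auto simp: Lambda_prods_def)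
  obtain d1 where "deriv P NT d1 Zero" using d_zero L by blast
  then have "rderiv P (App (Var NT) (Var NT)) ([d1] @ [d1]) (App Zero Zero)"
    by (meson deriv_rderiv.intros)
  then show ?thesis using p by (meson deriv_rderiv.intros)
qed

lemma bad_c: "is_term (sucs j c) \<Longrightarrow> lo_step (sucs j c) = None \<Longrightarrow> c = Shift \<or> (\<exists>a b. c = Clo a b) \<Longrightarrow> False"
proof (cases j)
  case 0
  assume "is_term (sucs j c)" "lo_step (sucs j c) = None" "c = Shift \<or> (\<exists>a b. c = Clo a b)"
  then obtain a b where ab: "c = Clo a b" "is_term a" "is_subst b" "lo_step (Clo a b) = None"
    using 0 by auto
  then show False using clo_not_nf[OF ab(2,3)] by blast
next
  case (Suc k)
  assume "is_term (sucs j c)" "c = Shift \<or> (\<exists>a b. c = Clo a b)"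
  then show False using Suc sucs_idx[of k c] by auto
qed

lemma NN_no_clo:
  assumes rg: "reduction_grammar P n" and sg: "simple_grammar P"
    and dc: "deriv P NN dc (Clo a b)"
  shows False
proof -
  have fin: "finite P" and L: "Lambda_prods \<subseteq> P"
    and G0: "lang P (Var (NG 0)) = {t. is_term t \<and> normalises_in t 0}"
    using rg unfolding reduction_grammar_def by auto
  have "inj (\<lambda>m. (NG 0, sucs m (Zero::nt tm)))"
    by (auto simp: inj_def dest: sucs_inj)
  then have "finite ((\<lambda>m. (NG 0, sucs m Zero)) -` P)"
    by (rule finite_vimageI[OF fin])
  then obtain m where "m \<notin> (\<lambda>m. (NG 0, sucs m Zero)) -` P"
    using ex_new_if_finite[OF infinite_UNIV_nat] by blast
  then have m: "(NG 0, sucs m Zero) \<notin> P" by simp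
  have "sucs m Zero \<in> lang P (Var (NG 0))"
    using G0 sucs_term sucs_nf by (auto simp: normalises_in_def)
  then obtain ds where "rderiv P (Var (NG 0)) ds (sucs m Zero)" by (auto simp: lang_def)
  then obtain d where "deriv P (NG 0) d (sucs m Zero)" by (cases rule: rderiv.cases) auto
  then obtain \<beta> ds' where b: "(NG 0, \<beta>) \<in> P" "rderiv P \<beta> ds' (sucs m Zero)"
    by (cases rule: deriv.cases) auto
  have "\<beta> \<noteq> sucs m Zero" using m b(1) by blast
  with shape[OF b(2) refl] obtain j X d where
    jX: "\<beta> = sucs j (Var X)" by blast
  have inL: "sucs j c \<in> lang P (Var (NG 0))" if "deriv P X d' c" for d' c
  proof -
    have "rderiv P \<beta> [d'] (sucs j c)" using jX rderiv_sucs[OF that] by simp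
    then have "deriv P (NG 0) (DNode (NG 0, \<beta>) [d']) (sucs j c)" by (rule d_prod[OF b(1)])
    then have "rderiv P (Var (NG 0)) [DNode (NG 0, \<beta>) [d']] (sucs j c)" by (rule r_var)
    then show ?thesis unfolding lang_def by blast
  qed
  have contra: "False" if "deriv P X d' c" "c = Shift \<or> (\<exists>a b. c = Clo a b)" for d' c
  proof -
    have "is_term (sucs j c)" "normalises_in (sucs j c) 0" using inL[OF that(1)] unfolding G0 by simp_all
    then have "lo_step (sucs j c) = None" by (simp add: normalises_in_def)
    then show False using bad_c[OF \<open>is_term (sucs j c)\<close> _ that(2)] by blast
  qed
  have Xin: "X \<in> set_tm \<beta>" using jX by (induction j arbitrary: \<beta>) auto
  have sgb: "(NG 0 \<in> set_tm \<beta> \<longrightarrow> (NG 0, \<beta>) \<in> Lambda_prods \<or> (\<exists>k. NG 0 = NG k \<and> (\<beta> = Lam (Var (NG k)) \<or> \<beta> = App (Var (NG 0)) (Var (NG k))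
                                \<or> \<beta> = App (Var (NG k)) (Var (NG 0))))) \<and>
        (\<forall>k. NG 0 = NG k \<and> NG 0 \<notin> set_tm \<beta> \<longrightarrow> set_tm \<beta> \<subseteq> {NT, NS, NN} \<union> NG ` {..<k})"
    using bspec[OF sg[unfolded simple_grammar_def] b(1)] by simp
  have nl: "(NG 0, \<beta>) \<notin> Lambda_prods" by (auto simp: Lambda_prods_def)
  have nla: "\<beta> \<noteq> Lam (Var (NG 0))" "\<beta> \<noteq> App (Var (NG 0)) (Var (NG 0))"
    using jX by (cases j; simp)+
  have "X \<in> {NT, NS, NN}"
  proof (cases "NG 0 \<in> set_tm \<beta>")
    case True
    then show ?thesis using sgb nl nla by auto
  next
    case False
    then have "set_tm \<beta> \<subseteq> {NT, NS, NN} \<union> NG ` {..<0}" using sgb by blast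
    then show ?thesis using Xin by auto
  qed
  then consider "X = NT" | "X = NS" | "X = NN" by blast
  then show False
  proof cases
    case 1 then show False using d_cloZS[OF L] contra by blast
  next
    case 2 then show False using d_shift[OF L] contra by blast
  next
    case 3 then show False using dc contra by blast
  qed
qed

theorem mainTheorem6:
  fixes P :: "prod set" and n :: nat and \<alpha> :: "nt tm"
  assumes "reduction_grammar P n"
    and "simple_grammar P"
    and "verbose P"
    and "(NG n, \<alpha>) \<in> P"
  shows "\<forall>\<delta> \<in> lang P \<alpha>. closure_width \<delta> = closure_width \<alpha>"
proof
  fix \<delta> assume "\<delta> \<in> lang P \<alpha>"
  then obtain ds where rd: "rderiv P \<alpha> ds \<delta>" by (auto simp: lang_def)
  have L: "Lambda_prods \<subseteq> P"
    and Gn: "lang P (Var (NG n)) = {t. is_term t \<and> normalises_in t n}"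
    using assms(1) unfolding reduction_grammar_def by auto
  have inGn: "is_term t' \<and> normalises_in t' n" if "rderiv P \<alpha> ds' t'" for ds' t'
  proof -
    have "deriv P (NG n) (DNode (NG n, \<alpha>) ds') t'" using assms(4) that by (rule d_prod)
    then have "rderiv P (Var (NG n)) [DNode (NG n, \<alpha>) ds'] t'" by (rule r_var)
    then have "t' \<in> lang P (Var (NG n))" unfolding lang_def by blast
    then show ?thesis using Gn by auto
  qed
  define \<chi> where "\<chi> = hd_of \<alpha>"
  define \<sigma>s where "\<sigma>s = sp \<alpha>"
  have \<alpha>eq: "\<alpha> = closures \<chi> \<sigma>s" using decomp \<chi>_def \<sigma>s_def by metis
  have c0: "cwf \<chi> = 0" using cwf_hd \<chi>_def by simp
  from clo_inv[of P \<chi> \<sigma>s ds \<delta>] rd \<alpha>eq obtain t ds0 ss where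
    h: "rderiv P \<chi> ds0 t" "\<delta> = closures t ss" "length ss = length \<sigma>s"
    "\<forall>t' ds'. rderiv P \<chi> ds' t' \<longrightarrow> (\<exists>ds''. rderiv P \<alpha> ds'' (closures t' ss))"
    by auto
  have other: "is_term (closures t' ss) \<and> normalises_in (closures t' ss) n"
    if "rderiv P \<chi> ds' t'" for ds' t'
    using h(4) that inGn by blast
  have "cwf t = 0"
  proof (cases "\<exists>X. \<chi> = Var X")
    case False
    then show ?thesis using same_head[OF h(1) _ c0] by blast
  next
    case True
    then obtain X where X: "\<chi> = Var X" by blast
    have vX: "rderiv P \<chi> [d] c" if "deriv P X d c" for d c
      using X that by (simp add: r_var)
    show ?thesis
    proof (cases X)
      case NT
      obtain d1 where d1: "deriv P NT d1 Zero" using d_zero[OF L] by blast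
      obtain d2 where d2: "deriv P NT d2 (App Zero Zero)" using d_app[OF L] by blast
      obtain d3 where d3: "deriv P NT d3 (Clo Zero Shift)" using d_cloZS[OF L] by blast
      have n1: "normalises_in (closures Zero ss) n" using other vX d1 NT by blast
      have n2: "normalises_in (closures (App Zero Zero) ss) n" using other vX d2 NT by blast
      have "length ss + n + n = n"
        using normalises_det[OF app_norm[OF n1] n2] .
      then have "ss = []" "n = 0" by auto
      moreover have "normalises_in (closures (Clo Zero Shift) ss) n" using other vX d3 NT by blast
      ultimately show ?thesis by (simp add: normalises_in_def)
    next
      case NS
      obtain d1 where "deriv P NS d1 Shift" using d_shift[OF L] by blast
      then have "is_term (closures Shift ss)" using other vX NS by blast
      then show ?thesis using is_term_closures by fastforce
    next
      case NN
      show ?thesis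
      proof (cases t)
        case (Clo a b)
        then have "\<exists>d. deriv P NN d (Clo a b)" using h(1) X NN
          by (auto elim: rderiv.cases)
        then show ?thesis using NN_no_clo[OF assms(1,2)] by blast
      qed auto
    next
      case (NG k)
      then have False using assms(3,4) \<alpha>eq X unfolding verbose_def by blast
      then show ?thesis ..
    qed
  qed
  then show "closure_width \<delta> = closure_width \<alpha>"
    using h(2,3) \<alpha>eq c0 by (simp add: cw_eq cwf_closures)
qed

end
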